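(* Let $b\ge 3$, $D\subset\{0,\dots,b-1\}$ with $2\le|D|<b-1$, and list $\mathcal C=\mathcal C_{b,D}$ increasingly as $k_0<k_1<\cdots$. Given $\epsilon>0$ and $H\in\mathbb N$, for all sufficiently large $n_0$ there exist a set $G\subset \mathcal C\cap[0,b^{n_0})$ and a map $(k',h)\mapsto k''(k',h)\in\mathcal C\cap[0,b^{n_0})$, defined for $k'\in G$ and $0<h\le H$, such that: (1) $|G|\ge(1-\epsilon)|D|^{n_0}$; (2) for every $k'\in G$, $0<h\le H$ and $m\ge 1$, if $n$ is the index with $k_n=b^{n_0}k_m+k'$, then $k_{n+h}=b^{n_0}k_m+k''(k',h)$ and $s_b(k_{n+h})=s_b(k_m)+s_b(k''(k',h))$.
   Context: For an integer base $b\ge 3$ and a digit set $D$, the classical integer Cantor set is $\mathcal C_{b,D}=\{\sum_{j=0}^{k} d_j b^j : k\in\mathbb N_0,\ d_j\in D\}$. For a nonnegative integer $k=\sum_c k_c b^c$ with $k_c\in\{0,\dots,b-1\}$, $s_b(k)=\sum_c k_c$ is the base-$b$ sum of digits. *)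

theory Defs
  imports Complex_Main "HOL-Library.Infinite_Set"
begin

definition cantor_set :: "nat \<Rightarrow> nat set \<Rightarrow> nat set" where
  "cantor_set b D = {(\<Sum>j\<le>k. d j * b ^ j) | k d. \<forall>j\<le>k. d j \<in> D}"

definition cantor_enum :: "nat \<Rightarrow> nat set \<Rightarrow> nat \<Rightarrow> nat" where
  "cantor_enum b D n = enumerate (cantor_set b D) n"

text \<open>Base-b sum of digits: s_b(k) = sum over c of the c-th base-b digit of k
  (digits of position c > k vanish for b >= 2).\<close>
definition digit_sum :: "nat \<Rightarrow> nat \<Rightarrow> nat" where
  "digit_sum b k = (\<Sum>c\<le>k. (k div b ^ c) mod b)"

end

theory Submission
  imports Defs
begin

lemma C1: "d \<in> D \<Longrightarrow> d \<in> cantor_set b D"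
  unfolding cantor_set_def
  by (rule CollectI, rule exI[of _ 0], rule exI[of _ "\<lambda>_. d"]) simp

lemma C2: assumes "d \<in> D" "c \<in> cantor_set b D" shows "d + b * c \<in> cantor_set b D"
proof -
  from assms(2) obtain k e where c: "c = (\<Sum>j\<le>k. e j * b ^ j)" and e: "\<forall>j\<le>k. e j \<in> D"
    unfolding cantor_set_def by blast
  define e' where "e' = (\<lambda>j. if j = 0 then d else e (j - 1))"
  have "(\<Sum>j\<le>Suc k. e' j * b ^ j) = d + b * c"
    unfolding sum.atMost_Suc_shift c by (simp add: e'_def sum_distrib_left mult_ac)
  moreover have "\<forall>j\<le>Suc k. e' j \<in> D" using e assms(1) by (auto simp: e'_def)
  ultimately show ?thesis unfolding cantor_set_def mem_Collect_eq
    by (intro exI[of _ "Suc k"] exI[of _ e']) simp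
qed

lemma C3: assumes "D \<subseteq> {0..<b}" "c \<in> cantor_set b D"
  shows "c mod b \<in> D \<and> (c div b = 0 \<or> c div b \<in> cantor_set b D)"
proof -
  from assms(2) obtain k e where c: "c = (\<Sum>j\<le>k. e j * b ^ j)" and e: "\<forall>j\<le>k. e j \<in> D"
    unfolding cantor_set_def by blast
  have e0: "e 0 < b" using e assms(1) by auto
  show ?thesis
  proof (cases k)
    case 0
    then show ?thesis using c e e0 by auto
  next
    case (Suc k')
    define r where "r = (\<Sum>j\<le>k'. e (Suc j) * b ^ j)"
    have cr: "c = e 0 + b * r" unfolding c Suc sum.atMost_Suc_shift r_def
      by (simp add: sum_distrib_left mult_ac)
    have "r \<in> cantor_set b D" unfolding cantor_set_def r_def using e Suc by fastforce
    moreover have "c mod b = e 0" "c div b = r" using cr e0 by auto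
    ultimately show ?thesis using e by auto
  qed
qed

fun S :: "nat \<Rightarrow> nat set \<Rightarrow> nat \<Rightarrow> nat set" where
  "S b D 0 = {0}"
| "S b D (Suc n) = (\<lambda>(d,y). d + b * y) ` (D \<times> S b D n)"

lemma S_A: "a \<in> cantor_set b D \<Longrightarrow> y \<in> S b D n \<Longrightarrow> b ^ n * a + y \<in> cantor_set b D"
proof (induction n arbitrary: y)
  case 0 then show ?case by simp
next
  case (Suc n)
  then obtain d y' where "d \<in> D" "y' \<in> S b D n" "y = d + b * y'" by auto
  then have "b ^ Suc n * a + y = d + b * (b ^ n * a + y')" by (simp add: algebra_simps)
  then show ?case using Suc C2 \<open>d \<in> D\<close> \<open>y' \<in> S b D n\<close> by metis
qed

lemma S_C: "n \<ge> 1 \<Longrightarrow> y \<in> S b D n \<Longrightarrow> y \<in> cantor_set b D"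
proof (induction n arbitrary: y)
  case 0 then show ?case by simp
next
  case (Suc n)
  then obtain d y' where "d \<in> D" "y' \<in> S b D n" "y = d + b * y'" by auto
  show ?case
  proof (cases n)
    case 0 then show ?thesis using \<open>d \<in> D\<close> \<open>y' \<in> S b D n\<close> \<open>y = d + b * y'\<close> C1 by auto
  next
    case (Suc m) then show ?thesis using Suc.IH \<open>d \<in> D\<close> \<open>y' \<in> S b D n\<close> \<open>y = d + b * y'\<close> C2 by auto
  qed
qed

lemma S_lt: "D \<subseteq> {0..<b} \<Longrightarrow> y \<in> S b D n \<Longrightarrow> y < b ^ n"
proof (induction n arbitrary: y)
  case 0 then show ?case by simp
next
  case (Suc n)
  then obtain d y' where d: "d \<in> D" "y' \<in> S b D n" "y = d + b * y'" by auto
  have "d < b" using d Suc.prems by auto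
  have "y' + 1 \<le> b ^ n" using Suc.IH[OF Suc.prems(1) d(2)] by simp
  have "d + b * y' < b * (y' + 1)" using \<open>d < b\<close> by simp
  also have "\<dots> \<le> b * b ^ n" using \<open>y' + 1 \<le> b ^ n\<close> by (rule mult_le_mono2)
  finally show ?case using d by simp
qed

lemma S_B: "D \<subseteq> {0..<b} \<Longrightarrow> c \<in> cantor_set b D \<Longrightarrow> c div b ^ n \<noteq> 0 \<Longrightarrow> c mod b ^ n \<in> S b D n"
proof (induction n arbitrary: c)
  case 0 then show ?case by simp
next
  case (Suc n)
  have q: "c div b ^ Suc n = (c div b) div b ^ n" by (simp add: div_mult2_eq)
  then have "c div b \<noteq> 0" using Suc.prems(3) by (metis div_0)
  then have "c div b \<in> cantor_set b D" "c mod b \<in> D" using C3[OF Suc.prems(1,2)] by auto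
  then have "(c div b) mod b ^ n \<in> S b D n" using Suc q by auto
  moreover have "c mod b ^ Suc n = c mod b + b * ((c div b) mod b ^ n)"
    by (simp add: mod_mult2_eq)
  ultimately show ?case using \<open>c mod b \<in> D\<close> by auto
qed

lemma S_fin_card: "D \<subseteq> {0..<b} \<Longrightarrow> finite (S b D n) \<and> card (S b D n) = card D ^ n"
proof (induction n)
  case 0 then show ?case by simp
next
  case (Suc n)
  have fD: "finite D" using Suc.prems finite_subset by blast
  have inj: "inj_on (\<lambda>(d,y). d + b * y) (D \<times> S b D n)"
  proof (rule inj_onI, clarsimp)
    fix d y d' y' assume "d \<in> D" "d' \<in> D" "d + b * y = d' + b * y'"
    moreover then have "d < b" "d' < b" using Suc.prems by auto
    ultimately have "(d + b * y) mod b = (d' + b * y') mod b" "(d + b * y) div b = (d' + b * y') div b"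
      by auto
    then show "d = d' \<and> y = y'" using \<open>d < b\<close> \<open>d' < b\<close> by auto
  qed
  show ?case using Suc fD card_image[OF inj] by (simp add: card_cartesian_product)
qed

definition fs :: "nat \<Rightarrow> nat \<Rightarrow> nat \<Rightarrow> nat" where
  "fs b N k = (\<Sum>c<N. (k div b ^ c) mod b)"

lemma pow_gt: "b \<ge> 2 \<Longrightarrow> (c::nat) < b ^ c"
proof -
  assume "b \<ge> 2"
  have "c < 2 ^ c" by (rule less_exp)
  also have "(2::nat) ^ c \<le> b ^ c" using \<open>b \<ge> 2\<close> by (rule power_mono) simp
  finally show ?thesis .
qed

lemma ds_eq: assumes "b \<ge> 2" "k < b ^ N" shows "digit_sum b k = fs b N k"
proof -
  define M where "M = max N (Suc k)"
  have z: "(k div b ^ c) mod b = 0" if "c \<ge> N \<or> c \<ge> Suc k" for c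
  proof -
    have "k < b ^ c"
    proof (cases "c \<ge> N")
      case True
      then have "b ^ N \<le> b ^ c" using assms(1) by (intro power_increasing) auto
      then show ?thesis using assms(2) by simp
    next
      case False
      then have "k < c" using that by simp
      then show ?thesis using pow_gt[OF assms(1), of c] by simp
    qed
    then show ?thesis by simp
  qed
  have "digit_sum b k = (\<Sum>c<Suc k. (k div b ^ c) mod b)"
    unfolding digit_sum_def lessThan_Suc_atMost ..
  also have "\<dots> = (\<Sum>c<M. (k div b ^ c) mod b)"
    by (rule sum.mono_neutral_left) (use z in \<open>auto simp: M_def\<close>)
  also have "\<dots> = fs b N k" unfolding fs_def
    by (rule sym, rule sum.mono_neutral_left) (use z in \<open>auto simp: M_def\<close>)
  finally show ?thesis .
qed

lemma fs_Suc: "fs b (Suc N) k = k mod b + fs b N (k div b)"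
  unfolding fs_def sum.lessThan_Suc_shift by (simp add: div_mult2_eq)

lemma fs_split: assumes "b > 0" shows "y < b ^ n \<Longrightarrow> fs b (n + N) (b ^ n * a + y) = fs b n y + fs b N a"
proof (induction n arbitrary: y)
  case 0 then show ?case by (simp add: fs_def)
next
  case (Suc n)
  have m: "(b ^ Suc n * a + y) mod b = y mod b" by (simp add: mult.assoc)
  have d: "(b ^ Suc n * a + y) div b = b ^ n * a + y div b" using assms by (simp add: mult.assoc)
  have "y div b < b ^ n" using Suc.prems assms by (simp add: div_less_iff_less_mult mult.commute)
  then show ?case unfolding add_Suc fs_Suc m d using Suc.IH by simp
qed

lemma ds_split: assumes "b \<ge> 2" "y < b ^ n"
  shows "digit_sum b (b ^ n * a + y) = digit_sum b a + digit_sum b y"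
proof -
  have "a < b ^ a" using pow_gt[OF assms(1)] .
  have "b ^ n * a + y < b ^ n * a + b ^ n" using assms(2) by simp
  also have "\<dots> = b ^ n * (a + 1)" by simp
  also have "\<dots> \<le> b ^ n * b ^ a" using \<open>a < b ^ a\<close> by (intro mult_le_mono2) simp
  finally have "b ^ n * a + y < b ^ (n + a)" by (simp add: power_add)
  then show ?thesis using ds_eq[OF assms(1)] fs_split[of b y n a a] assms \<open>a < b ^ a\<close> by simp
qed

lemma C_inf: assumes "d \<in> D" "d \<ge> 1" "b \<ge> 2" shows "infinite (cantor_set b D)"
proof
  assume "finite (cantor_set b D)"
  then obtain m where m: "\<forall>x\<in>cantor_set b D. x \<le> m" using finite_nat_set_iff_bounded_le by blast
  have "(\<Sum>j\<le>m. d * b ^ j) \<in> cantor_set b D" unfolding cantor_set_def mem_Collect_eq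
    using assms(1) by (intro exI[of _ m] exI[of _ "\<lambda>_. d"]) simp
  moreover have "d * b ^ m \<le> (\<Sum>j\<le>m. d * b ^ j)" by (rule member_le_sum) auto
  moreover have "m < d * b ^ m" using pow_gt[OF assms(3), of m] assms(2)
    by (metis less_le_trans mult_1 mult_le_mono1)
  ultimately show False using m by fastforce
qed

lemma enum_block:
  assumes D: "D \<subseteq> {0..<b}" and b: "b \<ge> 2" and inf: "infinite (cantor_set b D)"
    and a: "a \<in> cantor_set b D" "a \<noteq> 0"
    and L: "L = sorted_list_of_set (S b D n0)"
    and e: "enumerate (cantor_set b D) n = b ^ n0 * a + L ! r"
  shows "r + h < length L \<Longrightarrow> enumerate (cantor_set b D) (n + h) = b ^ n0 * a + L ! (r + h)"
proof (induction h)
  case 0 then show ?case using e by simp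
next
  case (Suc h)
  let ?C = "cantor_set b D"
  have fin: "finite (S b D n0)" using S_fin_card[OF D] by blast
  have setL: "set L = S b D n0" using L fin by simp
  have sw: "sorted_wrt (<) L" using L strict_sorted_list_of_set by simp
  have so: "sorted L" using L by simp
  define i where "i = r + h"
  have i1: "i + 1 < length L" using Suc.prems i_def by simp
  have IH: "enumerate ?C (n + h) = b ^ n0 * a + L ! i" using Suc i_def by simp
  have Lt: "\<And>j. j < length L \<Longrightarrow> L ! j < b ^ n0" using S_lt[OF D] setL nth_mem by blast
  have "(LEAST s. s \<in> ?C \<and> b ^ n0 * a + L ! i < s) = b ^ n0 * a + L ! (i + 1)"
  proof (rule Least_equality)
    have "L ! i < L ! (i + 1)" using sw i1 by (simp add: sorted_wrt_nth_less)
    moreover have "b ^ n0 * a + L ! (i + 1) \<in> ?C"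
      using S_A[OF a(1)] setL i1 nth_mem by blast
    ultimately show "b ^ n0 * a + L ! (i + 1) \<in> ?C \<and> b ^ n0 * a + L ! i < b ^ n0 * a + L ! (i + 1)"
      by simp
  next
    fix c assume c: "c \<in> ?C \<and> b ^ n0 * a + L ! i < c"
    show "b ^ n0 * a + L ! (i + 1) \<le> c"
    proof (cases "c < b ^ n0 * Suc a")
      case False
      then show ?thesis using Lt[OF i1] by simp
    next
      case True
      have bp: "b ^ n0 > 0" using b by simp
      have "c div b ^ n0 = a" using True c by (intro div_nat_eqI) auto
      then have z: "c mod b ^ n0 \<in> S b D n0" using S_B[OF D] c a(2) by auto
      have ce: "c = b ^ n0 * a + c mod b ^ n0" using \<open>c div b ^ n0 = a\<close>
        by (metis div_mult_mod_eq mult.commute)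
      obtain j where j: "j < length L" "L ! j = c mod b ^ n0" using z setL by (metis in_set_conv_nth)
      have "L ! i < L ! j" using c ce j by simp
      have "i < j"
      proof (rule ccontr)
        assume "\<not> i < j"
        then have "L ! j \<le> L ! i" using so i1 by (intro sorted_nth_mono) auto
        then show False using \<open>L ! i < L ! j\<close> by simp
      qed
      then have "L ! (i + 1) \<le> L ! j" using so j(1) by (intro sorted_nth_mono) auto
      then show ?thesis using ce j by simp
    qed
  qed
  then show ?case using enumerate_Suc''[OF inf, of "n + h"] IH i_def by simp
qed

theorem mainTheorem2:
  fixes b :: nat and D :: "nat set" and \<epsilon> :: real and H :: nat
  assumes "b \<ge> 3" and "D \<subseteq> {0..<b}" and "2 \<le> card D" and "card D < b - 1"
    and "\<epsilon> > 0"
  shows "\<exists>N. \<forall>n0\<ge>N. \<exists>G kk.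
           G \<subseteq> cantor_set b D \<inter> {0..<b ^ n0}
         \<and> (\<forall>k'\<in>G. \<forall>h. 0 < h \<and> h \<le> H \<longrightarrow> kk k' h \<in> cantor_set b D \<inter> {0..<b ^ n0})
         \<and> real (card G) \<ge> (1 - \<epsilon>) * real (card D) ^ n0
         \<and> (\<forall>k'\<in>G. \<forall>h. 0 < h \<and> h \<le> H \<longrightarrow> (\<forall>m\<ge>1. \<forall>n.
               cantor_enum b D n = b ^ n0 * cantor_enum b D m + k' \<longrightarrow>
                 cantor_enum b D (n + h) = b ^ n0 * cantor_enum b D m + kk k' h
               \<and> digit_sum b (cantor_enum b D (n + h))
                   = digit_sum b (cantor_enum b D m) + digit_sum b (kk k' h)))"
proof -
  let ?C = "cantor_set b D"
  have b2: "b \<ge> 2" using assms(1) by simp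
  have Dsub: "D \<subseteq> {0..<b}" by (rule assms(2))
  have fD: "finite D" using Dsub finite_subset by blast
  obtain d where d: "d \<in> D" "d \<ge> 1"
  proof -
    have "D - {0} \<noteq> {}"
    proof
      assume "D - {0} = {}"
      then have "D \<subseteq> {0}" by blast
      then have "card D \<le> 1" using card_mono[of "{0}" D] by simp
      then show False using assms(3) by simp
    qed
    then obtain x where "x \<in> D" "x \<noteq> 0" by blast
    then show ?thesis using that by simp
  qed
  have inf: "infinite ?C" using C_inf[OF d b2] .
  define N :: nat where "N = nat \<lceil>real H / \<epsilon>\<rceil> + 1"
  show ?thesis
  proof (intro exI[of _ N] allI impI)
    fix n0 assume n0: "N \<le> n0"
    have n01: "n0 \<ge> 1" using n0 N_def by simp
    define L where "L = sorted_list_of_set (S b D n0)"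
    have fin: "finite (S b D n0)" and cardS: "card (S b D n0) = card D ^ n0"
      using S_fin_card[OF Dsub] by auto
    have setL: "set L = S b D n0" using L_def fin by simp
    have lenL: "length L = card D ^ n0" using L_def cardS by simp
    have dL: "distinct L" using L_def by simp
    define len where "len = card D ^ n0"
    have HL: "real H \<le> \<epsilon> * real len"
    proof -
      have "real H / \<epsilon> \<le> real N" unfolding N_def by linarith
      also have "\<dots> \<le> real n0" using n0 by simp
      also have "\<dots> \<le> real len"
      proof -
        have "n0 < 2 ^ n0" by (rule less_exp)
        also have "(2::nat) ^ n0 \<le> card D ^ n0" using assms(3) by (rule power_mono) simp
        finally show ?thesis unfolding len_def by simp
      qed
      finally show ?thesis using assms(5) by (simp add: field_simps)
    qed
    define G where "G = (\<lambda>r. L ! r) ` {0..<len - H}"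
    define kk where "kk = (\<lambda>y h. L ! ((THE r. r < len \<and> L ! r = y) + h))"
    have Lt: "\<And>j. j < len \<Longrightarrow> L ! j < b ^ n0 \<and> L ! j \<in> ?C \<and> L ! j \<in> S b D n0"
      using S_lt[OF Dsub] S_C[OF n01] setL nth_mem lenL len_def by metis
    have theR: "(THE r. r < len \<and> L ! r = L ! r0) = r0" if "r0 < len" for r0
      using that dL lenL len_def by (intro the_equality) (auto simp: nth_eq_iff_index_eq)
    have kkG: "\<exists>r. kk k' h = L ! (r + h) \<and> r + h < len \<and> k' = L ! r"
      if kG: "k' \<in> G" and hH: "h \<le> H" for k' h
    proof -
      obtain r where r: "r < len - H" "k' = L ! r" using kG unfolding G_def by auto
      have rl: "r < len" "r + h < len" using r hH by auto
      have "kk k' h = L ! (r + h)" unfolding kk_def r(2) theR[OF rl(1)] ..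
      then show ?thesis using rl r by blast
    qed
    have cardG: "card G = len - H"
      unfolding G_def using dL lenL len_def
      by (subst card_image) (auto simp: inj_on_def nth_eq_iff_index_eq)
    show "\<exists>G kk.
           G \<subseteq> cantor_set b D \<inter> {0..<b ^ n0}
         \<and> (\<forall>k'\<in>G. \<forall>h. 0 < h \<and> h \<le> H \<longrightarrow> kk k' h \<in> cantor_set b D \<inter> {0..<b ^ n0})
         \<and> real (card G) \<ge> (1 - \<epsilon>) * real (card D) ^ n0
         \<and> (\<forall>k'\<in>G. \<forall>h. 0 < h \<and> h \<le> H \<longrightarrow> (\<forall>m\<ge>1. \<forall>n.
               cantor_enum b D n = b ^ n0 * cantor_enum b D m + k' \<longrightarrow>
                 cantor_enum b D (n + h) = b ^ n0 * cantor_enum b D m + kk k' h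
               \<and> digit_sum b (cantor_enum b D (n + h))
                   = digit_sum b (cantor_enum b D m) + digit_sum b (kk k' h)))"
    proof (intro exI[of _ G] exI[of _ kk] conjI)
      show "G \<subseteq> ?C \<inter> {0..<b ^ n0}" unfolding G_def using Lt by auto
      show "\<forall>k'\<in>G. \<forall>h. 0 < h \<and> h \<le> H \<longrightarrow> kk k' h \<in> ?C \<inter> {0..<b ^ n0}"
        using kkG Lt by (metis IntI atLeastLessThan_iff zero_le)
      have "real (card G) \<ge> real len - real H" unfolding cardG by simp
      moreover have "(1 - \<epsilon>) * real (card D) ^ n0 = real len - \<epsilon> * real len"
        unfolding len_def by (simp add: algebra_simps)
      ultimately show "real (card G) \<ge> (1 - \<epsilon>) * real (card D) ^ n0" using HL by linarith
      show "\<forall>k'\<in>G. \<forall>h. 0 < h \<and> h \<le> H \<longrightarrow> (\<forall>m\<ge>1. \<forall>n.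
               cantor_enum b D n = b ^ n0 * cantor_enum b D m + k' \<longrightarrow>
                 cantor_enum b D (n + h) = b ^ n0 * cantor_enum b D m + kk k' h
               \<and> digit_sum b (cantor_enum b D (n + h))
                   = digit_sum b (cantor_enum b D m) + digit_sum b (kk k' h))"
      proof (intro ballI allI impI)
        fix k' h m n
        assume k': "k' \<in> G" and h: "0 < h \<and> h \<le> H" and m: "1 \<le> m"
          and e: "cantor_enum b D n = b ^ n0 * cantor_enum b D m + k'"
        obtain r where r: "kk k' h = L ! (r + h)" "r + h < len" "k' = L ! r"
          using kkG[OF k'] h by blast
        define a where "a = cantor_enum b D m"
        have aC: "a \<in> ?C" unfolding a_def cantor_enum_def using enumerate_in_set[OF inf] .
        have "enumerate ?C 0 < enumerate ?C m" using m inf by (intro enumerate_mono) auto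
        then have a0: "a \<noteq> 0" unfolding a_def cantor_enum_def by simp
        have eq: "cantor_enum b D (n + h) = b ^ n0 * a + kk k' h"
          using enum_block[OF Dsub b2 inf aC a0 L_def, of n r h] e r lenL len_def
          unfolding cantor_enum_def a_def by simp
        moreover have "digit_sum b (b ^ n0 * a + kk k' h) = digit_sum b a + digit_sum b (kk k' h)"
          using ds_split[OF b2] Lt r(1,2) by simp
        ultimately show "cantor_enum b D (n + h) = b ^ n0 * cantor_enum b D m + kk k' h
               \<and> digit_sum b (cantor_enum b D (n + h))
                   = digit_sum b (cantor_enum b D m) + digit_sum b (kk k' h)"
          unfolding a_def by simp
      qed
    qed
  qed
qed

end
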